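(* Let $v\equiv 3$ or $15\pmod{18}$ and let $S=(\mathbb{Z}_v,\mathcal{B})$ be a cyclic $\mathrm{STS}(v)$ (with cyclic automorphism $i\mapsto i+1\bmod v$) having no full orbit of Type $3$. Then $S$ has no full orbit of Type $1$ (i.e. all full orbits are of Type $2$).
   Context: A Steiner triple system $\mathrm{STS}(v)$ is a pair $(X,\mathcal{B})$ with $|X|=v$ and $\mathcal{B}$ a collection of 3-subsets of $X$ such that every 2-subset lies in exactly one block. It is cyclic if (after relabeling) $X=\mathbb{Z}_v$ and the map $\alpha: i\mapsto i+1 \pmod v$ maps blocks to blocks. The blocks are partitioned into orbits under the group generated by $\alpha$; an orbit with $v$ blocks is a full orbit. For $v\equiv 3\pmod 6$ there is exactly one short orbit, the orbit of $\{0,v/3,2v/3\}$, of size $v/3$. When $3\mid v$, an orbit is of Type $i$ ($i=1,2,3$) if every block in it contains elements of exactly $i$ distinct residue classes modulo $3$. *)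

theory Defs
  imports Main
begin

text \<open>Steiner triple system on the point set {0..<v} (a model of Z_v).\<close>
definition is_STS :: "nat \<Rightarrow> nat set set \<Rightarrow> bool" where
  "is_STS v \<B> \<longleftrightarrow>
     (\<forall>B\<in>\<B>. B \<subseteq> {0..<v} \<and> card B = 3) \<and>
     (\<forall>x\<in>{0..<v}. \<forall>y\<in>{0..<v}. x \<noteq> y \<longrightarrow> (\<exists>!B. B \<in> \<B> \<and> {x, y} \<subseteq> B))"

definition shift_block :: "nat \<Rightarrow> nat set \<Rightarrow> nat set" where
  "shift_block v B = (\<lambda>i. (i + 1) mod v) ` B"

definition is_cyclic_STS :: "nat \<Rightarrow> nat set set \<Rightarrow> bool" where
  "is_cyclic_STS v \<B> \<longleftrightarrow> is_STS v \<B> \<and> (\<forall>B\<in>\<B>. shift_block v B \<in> \<B>)"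

definition block_orbit :: "nat \<Rightarrow> nat set \<Rightarrow> nat set set" where
  "block_orbit v B = {(shift_block v ^^ k) B | k. True}"

definition full_orbit :: "nat \<Rightarrow> nat set \<Rightarrow> bool" where
  "full_orbit v B \<longleftrightarrow> card (block_orbit v B) = v"

definition num_classes :: "nat set \<Rightarrow> nat" where
  "num_classes B = card ((\<lambda>x. x mod 3) ` B)"

definition orbit_of_type :: "nat \<Rightarrow> nat \<Rightarrow> nat set \<Rightarrow> bool" where
  "orbit_of_type v i B \<longleftrightarrow> (\<forall>C\<in>block_orbit v B. num_classes C = i)"

end

theory Submission
  imports Defs
begin

definition pairsR :: "(nat \<Rightarrow> nat \<Rightarrow> bool) \<Rightarrow> nat set \<Rightarrow> (nat \<times> nat) set" where
  "pairsR R A = Sigma A (\<lambda>x. {y\<in>A. R x y} - {x})"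

lemma dc:
  assumes "is_STS v \<B>"
  shows "card (pairsR R {0..<v}) = (\<Sum>B\<in>\<B>. card (pairsR R B))"
proof -
  have H: "\<forall>x\<in>{0..<v}. \<forall>y\<in>{0..<v}. x \<noteq> y \<longrightarrow> (\<exists>!B. B \<in> \<B> \<and> {x, y} \<subseteq> B)"
    using assms unfolding is_STS_def by (elim conjE)
  have H1: "\<forall>B\<in>\<B>. B \<subseteq> {0..<v} \<and> card B = 3"
    using assms unfolding is_STS_def by (elim conjE)
  have fin: "finite \<B>"
  proof -
    have "\<B> \<subseteq> Pow {0..<v}" using H1 by blast
    then show ?thesis by (rule finite_subset) simp
  qed
  have eq: "pairsR R {0..<v} = (\<Union>B\<in>\<B>. pairsR R B)"
  proof
    show "pairsR R {0..<v} \<subseteq> (\<Union>B\<in>\<B>. pairsR R B)"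
    proof
      fix p assume p: "p \<in> pairsR R {0..<v}"
      obtain x y where pxy: "p = (x,y)" by (cases p)
      with p have xy: "p = (x,y)" "x < v" "y < v" "x \<noteq> y" "R x y"
        unfolding pairsR_def by auto
      have "\<exists>!B. B \<in> \<B> \<and> {x,y} \<subseteq> B" using H[rule_format, of x y] xy by simp
      then obtain B where "B \<in> \<B>" "{x,y} \<subseteq> B" by blast
      then show "p \<in> (\<Union>B\<in>\<B>. pairsR R B)" using xy unfolding pairsR_def by auto
    qed
  next
    show "(\<Union>B\<in>\<B>. pairsR R B) \<subseteq> pairsR R {0..<v}"
      using H1 unfolding pairsR_def by blast
  qed
  have disj: "\<forall>A\<in>\<B>. \<forall>B\<in>\<B>. A \<noteq> B \<longrightarrow> pairsR R A \<inter> pairsR R B = {}"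
  proof (intro ballI impI)
    fix A B assume AB: "A \<in> \<B>" "B \<in> \<B>" "A \<noteq> B"
    show "pairsR R A \<inter> pairsR R B = {}"
    proof (rule ccontr)
      assume "pairsR R A \<inter> pairsR R B \<noteq> {}"
      then obtain x y where xy: "x \<in> A" "y \<in> A" "x \<in> B" "y \<in> B" "x \<noteq> y"
        unfolding pairsR_def by auto
      have "x < v" "y < v" using H1 AB(1) xy(1,2) by (meson atLeastLessThan_iff subsetD)+
      then have "\<exists>!C. C \<in> \<B> \<and> {x, y} \<subseteq> C" using xy H[rule_format, of x y] by simp
      then show False using xy AB by auto
    qed
  qed
  have finB: "\<forall>B\<in>\<B>. finite (pairsR R B)"
  proof
    fix B assume "B \<in> \<B>"
    then have "finite B" using H1 finite_subset by blast
    moreover have "pairsR R B \<subseteq> B \<times> B" unfolding pairsR_def by auto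
    ultimately show "finite (pairsR R B)" by (meson finite_SigmaI finite_subset)
  qed
  have "card (\<Union>B\<in>\<B>. pairsR R B) = (\<Sum>B\<in>\<B>. card (pairsR R B))"
    by (rule card_UN_disjoint[of \<B> "pairsR R", OF fin finB disj])
  then show ?thesis using eq by simp
qed


lemma card_sigma_const:
  assumes "finite A" "\<And>x. x \<in> A \<Longrightarrow> card (F x) = c" "\<And>x. x\<in>A \<Longrightarrow> finite (F x)"
  shows "card (Sigma A F) = card A * c"
  using assms by (simp add: card_SigmaI)

lemma card_all_block:
  assumes "card B = 3" shows "card (pairsR (\<lambda>x y. True) B) = 6"
proof -
  have f: "finite B" using assms by (metis card.infinite zero_neq_numeral)
  have "card (pairsR (\<lambda>x y. True) B) = card B * 2"
    unfolding pairsR_def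
    by (rule card_sigma_const) (use f assms in auto)
  then show ?thesis using assms by simp
qed

lemma card_all:
  "card (pairsR (\<lambda>x y. True) {0..<v}) = v * (v - 1)"
proof -
  have "card (Sigma {0..<v} (\<lambda>x. {y\<in>{0..<v}. True} - {x})) = card {0..<v} * (v - 1)"
  proof (rule card_sigma_const)
    fix x assume "x \<in> {0..<v}"
    then show "card ({y\<in>{0..<v}. True} - {x}) = v - 1" by simp
  qed simp_all
  then show ?thesis unfolding pairsR_def by simp
qed

lemma card_class:
  assumes "r < 3" shows "card {y\<in>{0..<3*n}. y mod 3 = r} = n"
proof -
  have "{y\<in>{0..<3*n}. y mod 3 = r} = (\<lambda>k. 3*k + r) ` {..<n}"
  proof
    show "{y\<in>{0..<3*n}. y mod 3 = r} \<subseteq> (\<lambda>k. 3*k + r) ` {..<n}"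
    proof
      fix y assume "y \<in> {y\<in>{0..<3*n}. y mod 3 = r}"
      then have "y = 3*(y div 3) + r" "y div 3 < n" by auto
      then show "y \<in> (\<lambda>k. 3*k + r) ` {..<n}" by blast
    qed
  qed (use assms in auto)
  moreover have "inj_on (\<lambda>k. 3*k + r) {..<n}" by (auto simp: inj_on_def)
  ultimately show ?thesis by (simp add: card_image)
qed

lemma card_same:
  "card (pairsR (\<lambda>x y. x mod 3 = y mod 3) {0..<3*n}) = 3*n * (n - 1)"
proof -
  have "card (Sigma {0..<3*n} (\<lambda>x. {y\<in>{0..<3*n}. x mod 3 = y mod 3} - {x})) = card {0..<3*n} * (n - 1)"
  proof (rule card_sigma_const)
    fix x assume x: "x \<in> {0..<3*n}"
    have e: "{y\<in>{0..<3*n}. x mod 3 = y mod 3} = {y\<in>{0..<3*n}. y mod 3 = x mod 3}" by auto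
    have "card {y\<in>{0..<3*n}. y mod 3 = x mod 3} = n" by (rule card_class) simp
    then show "card ({y\<in>{0..<3*n}. x mod 3 = y mod 3} - {x}) = n - 1"
      unfolding e using x by (subst card_Diff_singleton) auto
  qed simp_all
  then show ?thesis unfolding pairsR_def by simp
qed


lemma block_same:
  assumes "card B = 3"
  shows "(num_classes B = 1 \<and> card (pairsR (\<lambda>x y. x mod 3 = y mod 3) B) = 6) \<or>
         (num_classes B = 2 \<and> card (pairsR (\<lambda>x y. x mod 3 = y mod 3) B) = 2) \<or>
         (num_classes B = 3 \<and> card (pairsR (\<lambda>x y. x mod 3 = y mod 3) B) = 0)"
proof -
  obtain a b c where B: "B = {a,b,c}" and d: "a \<noteq> b" "b \<noteq> c" "a \<noteq> c"
    using assms card_3_iff by metis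
  have nc: "num_classes B = card {a mod 3, b mod 3, c mod 3}"
    unfolding num_classes_def B by simp
  have P: "pairsR (\<lambda>x y. x mod 3 = y mod 3) B =
     {p. p \<in> {(a,b),(a,c),(b,a),(b,c),(c,a),(c,b)} \<and> fst p mod 3 = snd p mod 3}"
    unfolding pairsR_def B using d by auto
  show ?thesis
  proof (cases "a mod 3 = b mod 3")
    case ab: True
    show ?thesis
    proof (cases "a mod 3 = c mod 3")
      case ac: True
      have "pairsR (\<lambda>x y. x mod 3 = y mod 3) B = {(a,b),(a,c),(b,a),(b,c),(c,a),(c,b)}"
        unfolding P using ab ac by auto
      then show ?thesis using nc ab ac d by (simp add: insert_commute)
    next
      case ac: False
      have "pairsR (\<lambda>x y. x mod 3 = y mod 3) B = {(a,b),(b,a)}"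
        unfolding P using ab ac by auto
      then show ?thesis using nc ab ac d by (simp add: insert_commute)
    qed
  next
    case ab: False
    show ?thesis
    proof (cases "a mod 3 = c mod 3")
      case ac: True
      have "pairsR (\<lambda>x y. x mod 3 = y mod 3) B = {(a,c),(c,a)}"
        unfolding P using ab ac by auto
      then show ?thesis using nc ab ac d by (simp add: insert_commute)
    next
      case ac: False
      show ?thesis
      proof (cases "b mod 3 = c mod 3")
        case bc: True
        have "pairsR (\<lambda>x y. x mod 3 = y mod 3) B = {(b,c),(c,b)}"
          unfolding P using ab ac bc by auto
        then show ?thesis using nc ab ac bc d by simp
      next
        case bc: False
        have "pairsR (\<lambda>x y. x mod 3 = y mod 3) B = {}"
          unfolding P using ab ac bc by auto
        then show ?thesis using nc ab ac bc d by simp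
      qed
    qed
  qed
qed


lemma pow_shift:
  assumes "0 < v" "B \<subseteq> {0..<v}"
  shows "(shift_block v ^^ k) B = (\<lambda>i. (i+k) mod v) ` B"
proof (induction k)
  case 0
  have "(\<lambda>i. (i+0) mod v) ` B = id ` B"
    by (rule image_cong) (use assms in auto)
  then show ?case by simp
next
  case (Suc k)
  have "(shift_block v ^^ Suc k) B = shift_block v ((shift_block v ^^ k) B)" by simp
  also have "\<dots> = (\<lambda>i. (i+1) mod v) ` ((\<lambda>i. (i+k) mod v) ` B)"
    unfolding Suc shift_block_def ..
  finally have "(shift_block v ^^ Suc k) B = (\<lambda>i. (i+1) mod v) ` ((\<lambda>i. (i+k) mod v) ` B)" .
  also have "\<dots> = (\<lambda>i. ((i+k) mod v + 1) mod v) ` B" by (simp add: image_image)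
  also have "\<dots> = (\<lambda>i. (i + Suc k) mod v) ` B"
  proof (rule image_cong)
    fix x show "((x+k) mod v + 1) mod v = (x + Suc k) mod v"
      by (metis mod_add_left_eq add_Suc_right Suc_eq_plus1)
  qed simp
  finally show ?case .
qed

lemma sh_comp:
  fixes a b v :: nat and B :: "nat set"
  shows "(\<lambda>i. (i+a) mod v) ` ((\<lambda>i. (i+b) mod v) ` B) = (\<lambda>i. (i+(b+a)) mod v) ` B"
  unfolding image_image
proof (rule image_cong)
  fix x show "((x+b) mod v + a) mod v = (x+(b+a)) mod v"
    by (metis mod_add_left_eq add.assoc)
qed simp

lemma sh_mod:
  fixes k v :: nat and B :: "nat set"
  shows "(\<lambda>i. (i+k) mod v) ` B = (\<lambda>i. (i+(k mod v)) mod v) ` B"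
  by (rule image_cong) (simp_all, metis mod_add_right_eq)

lemma sh_v:
  fixes v :: nat and B :: "nat set"
  assumes "B \<subseteq> {0..<v}" shows "(\<lambda>i. (i+v) mod v) ` B = B"
proof -
  have "(\<lambda>i. (i+v) mod v) ` B = id ` B"
  proof (rule image_cong)
    fix x assume "x \<in> B" then have "x < v" using assms by auto
    then show "(x+v) mod v = id x" by (metis mod_add_self2 mod_less id_apply)
  qed simp
  then show ?thesis by simp
qed

lemma orbit_eq:
  assumes "0 < v" "B \<subseteq> {0..<v}"
  shows "block_orbit v B = (\<lambda>k. (\<lambda>i. (i+k) mod v) ` B) ` {..<v}"
proof
  show "block_orbit v B \<subseteq> (\<lambda>k. (\<lambda>i. (i+k) mod v) ` B) ` {..<v}"
  proof
    fix C assume "C \<in> block_orbit v B"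
    then obtain k where "C = (shift_block v ^^ k) B" unfolding block_orbit_def by blast
    then have "C = (\<lambda>i. (i+(k mod v)) mod v) ` B" using pow_shift[OF assms] sh_mod by metis
    moreover have "k mod v < v" using assms by simp
    ultimately show "C \<in> (\<lambda>k. (\<lambda>i. (i+k) mod v) ` B) ` {..<v}" by blast
  qed
next
  show "(\<lambda>k. (\<lambda>i. (i+k) mod v) ` B) ` {..<v} \<subseteq> block_orbit v B"
    unfolding block_orbit_def using pow_shift[OF assms] by blast
qed

lemma nc_shift:
  fixes v k :: nat and B :: "nat set"
  assumes "3 dvd v"
  shows "num_classes ((\<lambda>i. (i+k) mod v) ` B) = num_classes B"
proof -
  have "(\<lambda>x. x mod 3) ` ((\<lambda>i. (i+k) mod v) ` B) = (\<lambda>c. (c+k) mod 3) ` ((\<lambda>x. x mod 3) ` B)"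
    by (simp add: image_image mod_mod_cancel[OF assms] mod_add_left_eq)
  moreover have "inj_on (\<lambda>c. (c+k) mod 3) ((\<lambda>x. x mod 3) ` B)"
  proof (rule inj_onI)
    fix x y assume "x \<in> (\<lambda>x. x mod 3) ` B" "y \<in> (\<lambda>x. x mod 3) ` B"
      and e: "(x+k) mod 3 = (y+k) mod 3"
    then have "x < 3" "y < 3" by auto
    with e show "x = y" by presburger
  qed
  ultimately show ?thesis unfolding num_classes_def by (simp add: card_image)
qed

lemma nonfull:
  assumes "0 < v" "B \<subseteq> {0..<v}" "\<not> full_orbit v B"
  shows "\<exists>d. 0 < d \<and> d < v \<and> (\<lambda>i. (i+d) mod v) ` B = B"
proof -
  let ?f = "\<lambda>k. (\<lambda>i. (i+k) mod v) ` B"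
  have "card (?f ` {..<v}) \<noteq> v" using assms orbit_eq unfolding full_orbit_def by metis
  then have "\<not> inj_on ?f {..<v}" using card_image by fastforce
  then obtain j k where jk: "j < v" "k < v" "j \<noteq> k" "?f j = ?f k"
    unfolding inj_on_def by blast
  have key: "\<And>j k. j < v \<Longrightarrow> k < v \<Longrightarrow> j < k \<Longrightarrow> ?f j = ?f k \<Longrightarrow> \<exists>d. 0 < d \<and> d < v \<and> (\<lambda>i. (i+d) mod v) ` B = B"
  proof -
    fix j k assume a: "j < v" "k < v" "j < k" "?f j = ?f k"
    have "(\<lambda>i. (i+(v-j)) mod v) ` (?f j) = (\<lambda>i. (i+v) mod v) ` B"
      using sh_comp[of "v-j" v j B] a by simp
    also have "\<dots> = B" using sh_v assms by blast
    finally have 1: "(\<lambda>i. (i+(v-j)) mod v) ` (?f j) = B" .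
    have "(\<lambda>i. (i+(v-j)) mod v) ` (?f k) = (\<lambda>i. (i+(k-j+v)) mod v) ` B"
      using sh_comp[of "v-j" v k B] a by simp
    also have "\<dots> = (\<lambda>i. (i+(k-j)) mod v) ` B"
      by (rule image_cong) (simp_all add: add.assoc[symmetric])
    finally have "(\<lambda>i. (i+(k-j)) mod v) ` B = B" using 1 a by simp
    then show "\<exists>d. 0 < d \<and> d < v \<and> (\<lambda>i. (i+d) mod v) ` B = B" using a by (intro exI[of _ "k-j"]) auto
  qed
  show ?thesis
  proof (cases "j < k")
    case True then show ?thesis using key jk by blast
  next
    case False then show ?thesis using key[of k j] jk by auto
  qed
qed


lemma closure:
  fixes d v x m :: nat and B :: "nat set"
  assumes "(\<lambda>i. (i+d) mod v) ` B = B" "x \<in> B" "B \<subseteq> {0..<v}"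
  shows "(x + m*d) mod v \<in> B"
proof (induction m)
  case 0
  have "x < v" using assms by auto
  then show ?case using assms by simp
next
  case (Suc m)
  then have "((x + m*d) mod v + d) mod v \<in> B" using assms(1) by blast
  moreover have "((x + m*d) mod v + d) mod v = (x + Suc m * d) mod v"
  proof -
    have "((x + m*d) mod v + d) mod v = (x + m*d + d) mod v" by (rule mod_add_left_eq)
    moreover have "x + m*d + d = x + Suc m * d" by simp
    ultimately show ?thesis by simp
  qed
  ultimately show ?case by simp
qed

lemma addmod: "a < m \<Longrightarrow> (a + m) mod m = (a::nat)"
  by (metis mod_add_self2 mod_less)

lemma three_form:
  fixes n x :: nat
  assumes "0 < n" "x < 3*n"
  shows "{x, (x+n) mod (3*n), (x+2*n) mod (3*n)} = {x mod n, x mod n + n, x mod n + 2*n}"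
proof -
  define r where "r = x mod n"
  define q where "q = x div n"
  have x: "x = q*n + r" unfolding r_def q_def using div_mult_mod_eq[of x n] by simp
  have r: "r < n" unfolding r_def using assms by simp
  have "q < 3" unfolding q_def using assms by (simp add: div_less_iff_less_mult)
  then consider "q = 0" | "q = 1" | "q = 2" by linarith
  then show ?thesis
  proof cases
    case 1
    then have xr: "x = r" using x by simp
    have a: "(x+n) mod (3*n) = r + n" using r xr by simp
    have b: "(x+2*n) mod (3*n) = r + 2*n" using r xr by simp
    show ?thesis unfolding a b r_def[symmetric] using xr by auto
  next
    case 2
    then have xr: "x = n + r" using x by simp
    have a: "(x+n) mod (3*n) = r + 2*n" using r xr by simp
    have b: "(x+2*n) mod (3*n) = r" using addmod[of r "3*n"] r xr by (simp add: algebra_simps)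
    show ?thesis unfolding a b r_def[symmetric] using xr by auto
  next
    case 3
    then have xr: "x = 2*n + r" using x by simp
    have a: "(x+n) mod (3*n) = r" using addmod[of r "3*n"] r xr by (simp add: algebra_simps)
    have b: "(x+2*n) mod (3*n) = r + n" using addmod[of "r+n" "3*n"] r xr by (simp add: algebra_simps)
    show ?thesis unfolding a b r_def[symmetric] using xr by auto
  qed
qed

lemma stab:
  fixes v n d :: nat
  assumes v: "v = 3*n" "odd v" and B: "B \<subseteq> {0..<v}" "card B = 3"
    and d: "0 < d" "d < v" "(\<lambda>i. (i+d) mod v) ` B = B"
  shows "\<exists>r<n. B = {r, r+n, r+2*n}"
proof -
  have n0: "0 < n" using v by (cases n) auto
  have finB: "finite B" using B(2) by (metis card.infinite zero_neq_numeral)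
  obtain x where x: "x \<in> B" using B(2) by fastforce
  have xv: "x < v" using x B by auto
  let ?g = "\<lambda>m. (x + m*d) mod v"
  have gB: "?g ` {0..<4} \<subseteq> B" using closure[OF d(3) x B(1)] by blast
  have "\<not> inj_on ?g {0..<4}"
  proof
    assume "inj_on ?g {0..<4}"
    then have "card (?g ` {0..<4}) = 4" by (simp add: card_image)
    moreover have "card (?g ` {0..<4}) \<le> 3" using card_mono[OF finB gB] B(2) by simp
    ultimately show False by simp
  qed
  then obtain i j where ij0: "i < 4" "j < 4" "i \<noteq> j" "?g i = ?g j"
    unfolding inj_on_def by auto
  have "\<exists>i j. i < j \<and> j < 4 \<and> ?g i = ?g j"
  proof (cases "i < j")
    case True then show ?thesis using ij0 by blast
  next
    case False then show ?thesis using ij0 by (metis linorder_neqE_nat)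
  qed
  then obtain i j where ij: "i < j" "j < 4" "?g i = ?g j" by blast
  have "v dvd (x + j*d) - (x + i*d)"
    using ij mod_eq_dvd_iff_nat[of "x + i*d" "x + j*d" v] by (simp add: mult_le_mono1)
  then have dv: "v dvd (j - i) * d" by (simp add: diff_mult_distrib)
  have ndv: "\<not> v dvd d" using d by (meson nat_dvd_not_less)
  have "j - i = 1 \<or> j - i = 2 \<or> j - i = 3" using ij by linarith
  moreover have "j - i \<noteq> 1" using dv ndv by auto
  moreover have "j - i \<noteq> 2"
  proof
    assume "j - i = 2"
    then have "v dvd 2 * d" using dv by simp
    then obtain k where k: "2 * d = v * k" by blast
    then have "even (v * k)" by (metis dvd_triv_left)
    then have "even k" using v(2) by simp
    then obtain k' where "k = 2 * k'" by blast
    then have "d = v * k'" using k by simp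
    then have "v dvd d" by simp
    then show False using ndv by simp
  qed
  ultimately have "v dvd 3 * d" using dv by auto
  then have "n dvd d" using v by simp
  then obtain q where q: "d = n * q" by blast
  have "0 < q" "q < 3" using d q v by auto
  then have dq: "d = n \<or> d = 2*n" using q by (cases q; cases "q - 1"; simp)
  have sub: "{x, (x+n) mod v, (x+2*n) mod v} \<subseteq> B"
  proof -
    have gall: "\<forall>m\<in>{0..<4}. ?g m \<in> B" using gB by blast
    have g1: "?g 1 \<in> B" "?g 2 \<in> B" using gall[rule_format, of 1] gall[rule_format, of 2] by simp_all
    show ?thesis
    proof (cases "d = n")
      case True then show ?thesis using g1 x by simp
    next
      case False
      then have d2: "d = 2*n" using dq by simp
      have "(x + 2*d) mod v = ((x+n) + v) mod v" using d2 v by (simp add: algebra_simps)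
      also have "\<dots> = (x+n) mod v" by simp
      finally show ?thesis using g1 x d2 by simp
    qed
  qed
  have eq: "{x, (x+n) mod v, (x+2*n) mod v} = {x mod n, x mod n + n, x mod n + 2*n}"
    using three_form[OF n0] xv v by simp
  have c3: "card {x mod n, x mod n + n, x mod n + 2*n} = 3" using n0 by simp
  have "{x mod n, x mod n + n, x mod n + 2*n} = B"
    using card_subset_eq[OF finB] sub eq c3 B(2) by metis
  moreover have "x mod n < n" using n0 by simp
  ultimately show ?thesis by metis
qed


theorem mainTheorem4:
  fixes v :: nat and \<B> :: "nat set set"
  assumes "v mod 18 = 3 \<or> v mod 18 = 15"
    and "is_cyclic_STS v \<B>"
    and "\<not> (\<exists>B\<in>\<B>. full_orbit v B \<and> orbit_of_type v 3 B)"
  shows "\<not> (\<exists>B\<in>\<B>. full_orbit v B \<and> orbit_of_type v 1 B)"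
proof
  assume "\<exists>B\<in>\<B>. full_orbit v B \<and> orbit_of_type v 1 B"
  then obtain B0 where B0: "B0 \<in> \<B>" "orbit_of_type v 1 B0" by blast
  define n where "n = v div 3"
  define q where "q = v div 18"
  have "v = 18*q + v mod 18" using div_mult_mod_eq[of v 18] unfolding q_def by linarith
  then have q: "v = 18*q + 3 \<or> v = 18*q + 15" using assms(1) by auto
  have "3 dvd v" using q
  proof
    assume "v = 18*q + 3" then have "v = 3*(6*q+1)" by simp
    then show ?thesis by (rule dvdI)
  next
    assume "v = 18*q + 15" then have "v = 3*(6*q+5)" by simp
    then show ?thesis by (rule dvdI)
  qed
  then have vn: "v = 3 * n" unfolding n_def by simp
  have vodd: "odd v" using q by auto
  have v0: "0 < v" using vodd by (cases v) auto
  have n0: "0 < n" using v0 vn by simp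
  have sts: "is_STS v \<B>" using assms(2) unfolding is_cyclic_STS_def by simp
  have H1: "\<forall>B\<in>\<B>. B \<subseteq> {0..<v} \<and> card B = 3"
    using sts unfolding is_STS_def by (elim conjE)
  have finB: "finite \<B>"
  proof -
    have "\<B> \<subseteq> Pow {0..<v}" using H1 by blast
    then show ?thesis by (rule finite_subset) simp
  qed
  have "(shift_block v ^^ 0) B0 = B0" by simp
  then have "B0 \<in> block_orbit v B0" unfolding block_orbit_def by blast
  then have nc0: "num_classes B0 = 1" using B0 unfolding orbit_of_type_def by blast
  let ?T = "{B\<in>\<B>. num_classes B = 3}"
  have Tsub: "?T \<subseteq> (\<lambda>r. {r, r+n, r+2*n}) ` {..<n}"
  proof
    fix B assume BT: "B \<in> ?T"
    then have B: "B \<in> \<B>" "num_classes B = 3" by auto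
    have Bs: "B \<subseteq> {0..<v}" "card B = 3" using H1 B by auto
    have "\<not> full_orbit v B"
    proof
      assume f: "full_orbit v B"
      have "orbit_of_type v 3 B"
        unfolding orbit_of_type_def
      proof
        fix C assume "C \<in> block_orbit v B"
        then obtain k where "C = (\<lambda>i. (i+k) mod v) ` B" using orbit_eq[OF v0 Bs(1)] by blast
        then show "num_classes C = 3" using nc_shift[of v k B] vn B by simp
      qed
      then show False using assms(3) f B by blast
    qed
    then obtain d where "0 < d" "d < v" "(\<lambda>i. (i+d) mod v) ` B = B" using nonfull[OF v0 Bs(1)] by blast
    then obtain r where "r < n" "B = {r, r+n, r+2*n}" using stab[OF vn vodd Bs] by blast
    then show "B \<in> (\<lambda>r. {r, r+n, r+2*n}) ` {..<n}" by blast
  qed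
  have cardT: "card ?T \<le> n"
    using card_mono[OF _ Tsub] card_image_le[of "{..<n}" "\<lambda>r. {r, r+n, r+2*n}"] by simp
  let ?s = "\<lambda>B. card (pairsR (\<lambda>x y. x mod 3 = y mod 3) B)"
  have S1: "(\<Sum>B\<in>\<B>. ?s B) = 3*n*(n-1)"
    using dc[OF sts, of "\<lambda>x y. x mod 3 = y mod 3"] card_same[of n] vn by simp
  have "(\<Sum>B\<in>\<B>. card (pairsR (\<lambda>x y. True) B)) = v*(v-1)"
    using dc[OF sts, of "\<lambda>x y. True"] card_all[of v] by simp
  moreover have "(\<Sum>B\<in>\<B>. card (pairsR (\<lambda>x y. True) B)) = (\<Sum>B\<in>\<B>. 6)"
    using H1 card_all_block by (intro sum.cong) auto
  ultimately have S0: "6 * card \<B> = v*(v-1)" by simp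
  define w where "w = (\<lambda>B. 3 * int (?s B) - 6)"
  have "(\<Sum>B\<in>\<B>. w B) = 3 * int (\<Sum>B\<in>\<B>. ?s B) - 6 * int (card \<B>)"
    unfolding w_def by (simp add: sum_subtractf sum_distrib_left)
  also have "\<dots> = 3 * int (3*n*(n-1)) - int (6 * card \<B>)" using S1 by simp
  also have "\<dots> = 3 * int (3*n*(n-1)) - int (v*(v-1))" unfolding S0 ..
  also have "\<dots> = - 6 * int n"
    using n0 vn by (simp add: of_nat_diff algebra_simps)
  finally have sumw: "(\<Sum>B\<in>\<B>. w B) = - 6 * int n" .
  have wT: "w B = -6" if "B \<in> ?T" for B
  proof -
    have "card B = 3" "num_classes B = 3" using H1 that by auto
    then have "?s B = 0" using block_same[of B] by auto
    then show ?thesis unfolding w_def by simp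
  qed
  have wN: "0 \<le> w B" if "B \<in> \<B> - ?T" for B
  proof -
    have "card B = 3" "num_classes B \<noteq> 3" using H1 that by auto
    then have "?s B = 6 \<or> ?s B = 2" using block_same[of B] by auto
    then show ?thesis unfolding w_def by auto
  qed
  have w0: "w B0 = 12"
  proof -
    have "card B0 = 3" using H1 B0 by auto
    then have "?s B0 = 6" using block_same[of B0] nc0 by auto
    then show ?thesis unfolding w_def by simp
  qed
  have "(\<Sum>B\<in>\<B>. w B) = (\<Sum>B\<in>\<B> - ?T. w B) + (\<Sum>B\<in>?T. w B)"
    by (rule sum.subset_diff) (use finB in auto)
  moreover have "(\<Sum>B\<in>?T. w B) = - 6 * int (card ?T)"
    using wT by simp
  moreover have "w B0 \<le> (\<Sum>B\<in>\<B> - ?T. w B)"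
    by (rule member_le_sum) (use B0 nc0 wN finB in auto)
  ultimately have "- 6 * int n \<ge> 12 - 6 * int (card ?T)" using sumw w0 by linarith
  then show False using cardT by linarith
qed

end
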